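(* Let $E$ be a real Banach space and $\mathcal{C}\subset E$ a regular Birkhoff cone with $\ell\in E'$, $\|\ell\|=1$, and $K<\infty$ such that $\frac1K\|u\|\le\langle\ell,u\rangle\le\|u\|$ for $u\in\mathcal{C}$, and let $\rho>0$ with $\mathcal{C}(\rho)=\{x\in\mathcal{C}:B(x,\rho\|x\|)\subset\mathcal{C}\}$. Let $L\in L(E)$ with $L(\mathcal{C})\subset\mathcal{C}$. Then for every $x\in\mathcal{C}(\rho)\setminus\{0\}$, \[\frac\rho K\|L\|\,\|x\|\le\langle\ell,Lx\rangle\le\|L\|\,\|x\|\quad\text{and}\quad\frac\rho K\|L\|\le\frac{\langle\ell,Lx\rangle}{\langle\ell,x\rangle}\le K\|L\|.\]
   Context: A Birkhoff cone is a closed convex set $\mathcal{C}\subset E$ with $\mathbb{R}_+\mathcal{C}=\mathcal{C}$ and $\mathcal{C}\cap(-\mathcal{C})=\{0\}$; regular means it has non-empty interior and the stated outer regularity functional exists. *)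

theory Defs
  imports "HOL-Analysis.Analysis"
begin

definition birkhoff_cone :: "'a::real_normed_vector set \<Rightarrow> bool" where
  "birkhoff_cone C \<longleftrightarrow> closed C \<and> convex C \<and> C \<noteq> {} \<and>
     (\<forall>t::real. t \<ge> 0 \<longrightarrow> (\<forall>x\<in>C. t *\<^sub>R x \<in> C)) \<and>
     C \<inter> uminus ` C = {0}"

definition regular_birkhoff_cone ::
  "'a::real_normed_vector set \<Rightarrow> ('a \<Rightarrow> real) \<Rightarrow> real \<Rightarrow> bool" where
  "regular_birkhoff_cone C l K \<longleftrightarrow> birkhoff_cone C \<and> interior C \<noteq> {} \<and>
     bounded_linear l \<and> onorm l = 1 \<and> 0 < K \<and>
     (\<forall>u\<in>C. norm u / K \<le> l u \<and> l u \<le> norm u)"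

definition cone_rho :: "'a::real_normed_vector set \<Rightarrow> real \<Rightarrow> 'a set" where
  "cone_rho C \<rho> = {x\<in>C. ball x (\<rho> * norm x) \<subseteq> C}"

end

theory Submission
  imports Defs
begin

theorem lemmaA9:
  fixes C :: "'a::banach set" and l :: "'a \<Rightarrow> real" and K \<rho> :: real
    and L :: "'a \<Rightarrow> 'a" and x :: 'a
  assumes "regular_birkhoff_cone C l K"
    and "\<rho> > 0"
    and "bounded_linear L" and "L ` C \<subseteq> C"
    and "x \<in> cone_rho C \<rho> - {0}"
  shows "\<rho> / K * onorm L * norm x \<le> l (L x) \<and> l (L x) \<le> onorm L * norm x \<and>
         \<rho> / K * onorm L \<le> l (L x) / l x \<and> l (L x) / l x \<le> K * onorm L"
proof -
  have K: "K > 0" and ll: "bounded_linear l" and lC: "\<And>u. u \<in> C \<Longrightarrow> norm u / K \<le> l u \<and> l u \<le> norm u"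
    using assms(1) unfolding regular_birkhoff_cone_def by auto
  have xC: "x \<in> C" and xb: "ball x (\<rho> * norm x) \<subseteq> C" and x0: "x \<noteq> 0"
    using assms(5) unfolding cone_rho_def by auto
  interpret L: bounded_linear L by fact
  interpret l: bounded_linear l by fact
  have nx: "norm x > 0" using x0 by simp
  have LxC: "L x \<in> C" using assms(4) xC by auto
  have lx1: "norm x / K \<le> l x" and lx2: "l x \<le> norm x" using lC[OF xC] by auto
  have lxpos: "l x > 0" using lx1 nx K by (smt (verit) divide_pos_pos)
  have Lx1: "l (L x) \<le> norm (L x)" using lC[OF LxC] by auto
  have Lx2: "norm (L x) \<le> onorm L * norm x" using onorm[OF assms(3)] by simp
  have up: "l (L x) \<le> onorm L * norm x" using Lx1 Lx2 by linarith
  have onn: "onorm L \<ge> 0" using onorm_pos_le[OF assms(3)] .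
  have key: "norm (L w) \<le> K * l (L x)" if w: "norm w < \<rho> * norm x" for w
  proof -
    have "x + w \<in> C" using xb w by (auto simp: dist_norm)
    moreover have "x - w \<in> C" using xb w by (auto simp: dist_norm)
    ultimately have a: "L (x + w) \<in> C" "L (x - w) \<in> C" using assms(4) by auto
    have b1: "norm (L (x + w)) / K \<le> l (L (x + w))" using lC[OF a(1)] by auto
    have b2: "norm (L (x - w)) / K \<le> l (L (x - w))" using lC[OF a(2)] by auto
    have s: "l (L (x + w)) + l (L (x - w)) = 2 * l (L x)"
      by (simp add: L.add L.diff l.add l.diff)
    have "norm (2 *\<^sub>R L w) = norm (L (x + w) - L (x - w))"
      by (simp add: L.add L.diff scaleR_2 algebra_simps)
    also have "\<dots> \<le> norm (L (x + w)) + norm (L (x - w))" by (rule norm_triangle_ineq4)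
    finally have "2 * norm (L w) \<le> norm (L (x + w)) + norm (L (x - w))" by simp
    hence "2 * norm (L w) / K \<le> 2 * l (L x)" using b1 b2 s K
      by (smt (verit, ccfv_SIG) add_divide_distrib divide_right_mono)
    thus ?thesis using K by (simp add: field_simps)
  qed
  have bnd: "norm (L y) \<le> (K * l (L x) / (\<rho> * norm x)) * norm y" for y
  proof (cases "y = 0")
    case True thus ?thesis by simp
  next
    case False
    hence ny: "norm y > 0" by simp
    have rp: "\<rho> * norm x > 0" using assms(2) nx by simp
    have "(\<rho> * norm x / norm y) * norm (L y) \<le> K * l (L x)"
    proof (rule field_le_mult_one_interval)
      fix s :: real assume s: "0 < s" "s < 1"
      let ?w = "(s * (\<rho> * norm x / norm y)) *\<^sub>R y"
      have "norm ?w = s * (\<rho> * norm x)" using ny s rp by simp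
      also have "\<dots> < \<rho> * norm x" using s rp by (simp add: mult_less_cancel_right2)
      finally have "norm (L ?w) \<le> K * l (L x)" by (rule key)
      moreover have "norm (L ?w) = s * ((\<rho> * norm x / norm y) * norm (L y))"
        using ny s rp by (simp add: L.scaleR)
      ultimately show "s * ((\<rho> * norm x / norm y) * norm (L y)) \<le> K * l (L x)" by simp
    qed
    thus ?thesis using ny rp by (simp add: field_simps)
  qed
  have lLx0: "l (L x) \<ge> 0" using lC[OF LxC] K by (smt (verit) divide_nonneg_pos norm_ge_zero)
  have "onorm L \<le> K * l (L x) / (\<rho> * norm x)"
    by (rule onorm_bound) (use lLx0 K assms(2) nx bnd in auto)
  hence low: "\<rho> / K * onorm L * norm x \<le> l (L x)"
    using K assms(2) nx by (simp add: field_simps)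
  have "\<rho> / K * onorm L * l x \<le> \<rho> / K * onorm L * norm x"
    using lx2 onn K assms(2) by (intro mult_left_mono) auto
  hence c3: "\<rho> / K * onorm L \<le> l (L x) / l x" using low lxpos
    by (simp add: field_simps)
  have "onorm L * norm x \<le> onorm L * (K * l x)"
    using lx1 onn K by (intro mult_left_mono) (auto simp: field_simps)
  hence c4: "l (L x) / l x \<le> K * onorm L" using up lxpos
    by (simp add: field_simps)
  show ?thesis using low up c3 c4 by blast
qed

end
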